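(* Let $a,b>0$, $n\in\mathbb{N}$, $k_n=\frac{\pi n}{a}$, and assume $\sin(k_nb)\neq0$. Put $$\gamma_n^\pm=\pm2k_n\Big(\tan\frac{k_nb}{2}\Big)^{\pm1}.$$ Then $k_n^2$ belongs to the interior of $\sigma(\mathscr{H}_{\gamma_n^+})$ and to the interior of $\sigma(\mathscr{H}_{\gamma_n^-})$.
   Context: Let $\Gamma$ be the rectangular lattice quantum graph in $\mathbb{R}^2$ with vertex set $\{(ma,nb):m,n\in\mathbb{Z}\}$, horizontal edges of length $a$ and vertical edges of length $b$ joining nearest neighbours. For $\gamma\in\mathbb{R}$, $\mathscr{H}_\gamma$ is the self-adjoint operator in $L^2(\Gamma)$ acting as $-\frac{d^2}{dx^2}$ on each edge with a $\delta$-coupling of strength $\gamma$ at every vertex $v$ ($\psi$ continuous at $v$, sum of outward derivatives at $v$ equal to $\gamma\psi(v)$). Equivalently, for $k>0$ with $\sin(kb)\ne0$, $k^2\in\sigma(\mathscr{H}_\gamma)$ iff $\left|\frac{\gamma\sin ka}{2k}+\frac{\sin k(a+b)}{\sin kb}\right|\le1+\left|\frac{\sin ka}{\sin kb}\right|$. *)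

theory Defs
  imports "HOL-Analysis.Analysis"
begin

text \<open>Spectral condition for the rectangular lattice quantum graph with
delta-coupling of strength gamma at the vertices (edge lengths a, b), for k > 0
with sin(k b) /= 0.\<close>
definition lattice_band_cond :: "real \<Rightarrow> real \<Rightarrow> real \<Rightarrow> real \<Rightarrow> bool" where
  "lattice_band_cond a b \<gamma> k \<longleftrightarrow>
     \<bar>\<gamma> * sin (k * a) / (2 * k) + sin (k * (a + b)) / sin (k * b)\<bar>
       \<le> 1 + \<bar>sin (k * a) / sin (k * b)\<bar>"

text \<open>The part of the spectrum of H_gamma consisting of energies E = k^2 with
k > 0 and sin(k b) /= 0, as given by the characterization in the context.
It agrees with the full spectrum on every neighbourhood avoiding energies
E <= 0 and E = (m pi / b)^2.\<close>
definition lattice_spec :: "real \<Rightarrow> real \<Rightarrow> real \<Rightarrow> real set" where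
  "lattice_spec a b \<gamma> =
     {E. \<exists>k>0. E = k\<^sup>2 \<and> sin (k * b) \<noteq> 0 \<and> lattice_band_cond a b \<gamma> k}"

end

theory Submission
  imports Defs
begin

lemma core:
  fixes x cp S \<beta> :: real
  assumes "0 \<le> cp" "cp \<le> 1" "\<bar>\<beta> * S\<bar> \<le> 1" "\<bar>\<beta> * x\<bar> \<le> 1"
    and "x * S > 0 \<Longrightarrow> cp + \<beta> * x \<le> 1"
  shows "\<bar>x + cp * S + \<beta> * x * S\<bar> \<le> \<bar>x\<bar> + \<bar>S\<bar>"
proof -
  have A: "1 + \<beta> * S \<ge> 0" using assms(3) by (simp add: abs_le_iff)
  consider "x \<ge> 0" "S \<ge> 0" | "x \<le> 0" "S \<le> 0" | "x \<ge> 0" "S \<le> 0" | "x \<le> 0" "S \<ge> 0" by linarith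
  then show ?thesis
  proof cases
    case 1
    show ?thesis
    proof (cases "x * S > 0")
      case True
      then have "cp + \<beta> * x \<le> 1" using assms(5) by blast
      then have "S * (cp + \<beta> * x) \<le> S" using 1 by (metis mult_left_mono mult.right_neutral)
      moreover have "x * (1 + \<beta> * S) \<ge> 0" using A 1 by simp
      moreover have "cp * S \<ge> 0" using 1 assms by simp
      ultimately show ?thesis using 1 by (simp add: algebra_simps abs_le_iff)
    next
      case False
      then have "x = 0 \<or> S = 0" using 1 by (metis mult_pos_pos order_le_less)
      then show ?thesis using assms by (auto simp: abs_mult mult_left_le_one_le)
    qed
  next
    case 2
    show ?thesis
    proof (cases "x * S > 0")
      case True
      then have "cp + \<beta> * x \<le> 1" using assms(5) by blast
      then have "S * (cp + \<beta> * x) \<ge> S" using 2 by (metis mult_left_mono_neg mult.right_neutral)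
      moreover have "x * (1 + \<beta> * S) \<le> 0" using A 2 by (simp add: mult_nonpos_nonneg)
      moreover have "cp * S \<le> 0" using 2 assms by (simp add: mult_nonneg_nonpos)
      ultimately show ?thesis using 2 by (simp add: algebra_simps abs_le_iff)
    next
      case False
      then have "x = 0 \<or> S = 0" using 2 by (metis linorder_neqE_linordered_idom mult_neg_neg not_le)
      then show ?thesis using assms by (auto simp: abs_mult mult_left_le_one_le)
    qed
  next
    case 3
    have "\<bar>\<beta> * x * S\<bar> \<le> \<bar>S\<bar>" using assms(4) by (simp add: abs_mult mult_left_le_one_le)
    hence B: "\<beta> * x * S \<le> - S" using 3 by (simp add: abs_le_iff)
    have C: "x * (1 + \<beta> * S) \<ge> 0" using A 3 by simp
    have D: "cp * S \<le> 0" using 3 assms by (auto simp: mult_nonneg_nonpos)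
    have "(1 - cp) * S \<le> 0" using 3 assms by (intro mult_nonneg_nonpos) auto
    hence E: "cp * S \<ge> S" by (simp add: algebra_simps)
    have "x + cp * S + \<beta> * x * S \<le> x + (-S)" using B D by linarith
    moreover have "x + cp * S + \<beta> * x * S \<ge> -(x + (-S))" using C E 3 by (simp add: algebra_simps)
    ultimately show ?thesis using 3 by (simp add: abs_le_iff abs_of_nonneg abs_of_nonpos)
  next
    case 4
    have "\<bar>\<beta> * x * S\<bar> \<le> \<bar>S\<bar>" using assms(4) by (simp add: abs_mult mult_left_le_one_le)
    hence B: "\<beta> * x * S \<ge> - S" using 4 by (simp add: abs_le_iff)
    have C: "x * (1 + \<beta> * S) \<le> 0" using A 4 by (simp add: mult_nonpos_nonneg)
    have D: "cp * S \<ge> 0" using 4 assms by auto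
    have "(1 - cp) * S \<ge> 0" using 4 assms by (intro mult_nonneg_nonneg) auto
    hence E: "cp * S \<le> S" by (simp add: algebra_simps)
    have "x + cp * S + \<beta> * x * S \<ge> -((-x) + S)" using B D by linarith
    moreover have "x + cp * S + \<beta> * x * S \<le> (-x) + S" using C E 4 by (simp add: algebra_simps)
    ultimately show ?thesis using 4 by (simp add: abs_le_iff abs_of_nonneg abs_of_nonpos)
  qed
qed

lemma half:
  fixes p \<beta> :: real
  assumes "\<bar>p\<bar> < pi" "(p > 0 \<and> \<beta> \<le> tan (p/2)) \<or> (p < 0 \<and> \<beta> \<ge> tan (p/2))"
  shows "cos p + \<beta> * sin p \<le> 1"
proof -
  define h where "h = p/2"
  have hc: "cos h > 0" using assms(1) unfolding h_def by (intro cos_gt_zero_pi) auto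
  have sp: "sin p = 2 * sin h * cos h" and cp: "cos p = 1 - 2 * (sin h)^2"
    unfolding h_def using sin_double[of "p/2"] cos_double_sin[of "p/2"] by simp_all
  have th: "tan h = sin h / cos h" by (simp add: tan_def)
  have "\<beta> * cos h \<le> sin h" if "p > 0" "\<beta> \<le> tan h"
    using that hc th by (simp add: field_simps)
  moreover have "\<beta> * cos h \<ge> sin h" if "p < 0" "\<beta> \<ge> tan h"
    using that hc th by (simp add: field_simps)
  moreover have "sin h > 0" if "p > 0" using that assms(1) unfolding h_def by (intro sin_gt_zero) auto
  moreover have "sin h < 0" if "p < 0" using that assms(1) unfolding h_def
    using sin_gt_zero[of "-p/2"] by auto
  ultimately have "\<beta> * cos h * sin h \<le> sin h * sin h" using assms(2) unfolding h_def[symmetric]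
    by (metis mult_right_mono mult_right_mono_neg less_imp_le)
  then show ?thesis unfolding sp cp by (simp add: power2_eq_square algebra_simps)
qed

lemma band_at:
  fixes a b \<gamma> k \<sigma> sp cp \<epsilon> \<beta> :: real
  assumes "k > 0" "sin (k * b) \<noteq> 0" "sin (k * a) = \<sigma> * sp" "cos (k * a) = \<sigma> * cp" "\<bar>\<sigma>\<bar> = 1"
    and "\<gamma> / (2 * k) * sin (k * b) + cos (k * b) = \<epsilon> + \<beta> * sin (k * b)"
    and "\<bar>sp * (\<epsilon> + \<beta> * sin (k * b)) + cp * sin (k * b)\<bar> \<le> \<bar>sin (k * b)\<bar> + \<bar>sp\<bar>"
  shows "lattice_band_cond a b \<gamma> k"
proof -
  define S where "S = sin (k * b)"
  have S0: "S \<noteq> 0" using assms(2) S_def by simp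
  have sab: "sin (k * (a + b)) = \<sigma> * sp * cos (k * b) + \<sigma> * cp * S"
    using assms(3,4) unfolding S_def by (simp add: distrib_left sin_add)
  have "\<gamma> * sin (k * a) / (2 * k) + sin (k * (a + b)) / sin (k * b)
      = \<sigma> * (sp * (\<gamma> / (2 * k) * S + cos (k * b)) + cp * S) / S"
    using S0 assms(1) unfolding sab assms(3) S_def[symmetric] by (simp add: field_simps)
  also have "\<dots> = \<sigma> * (sp * (\<epsilon> + \<beta> * S) + cp * S) / S" using assms(6) S_def by simp
  finally have L: "\<bar>\<gamma> * sin (k * a) / (2 * k) + sin (k * (a + b)) / sin (k * b)\<bar>
      = \<bar>sp * (\<epsilon> + \<beta> * S) + cp * S\<bar> / \<bar>S\<bar>"
    using assms(5) by (simp add: abs_mult)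
  have R: "1 + \<bar>sin (k * a) / sin (k * b)\<bar> = (\<bar>S\<bar> + \<bar>sp\<bar>) / \<bar>S\<bar>"
    using S0 assms(5) unfolding assms(3) S_def[symmetric] by (simp add: abs_mult field_simps)
  show ?thesis unfolding lattice_band_cond_def L R using assms(7) S0 unfolding S_def[symmetric]
    by (simp add: divide_right_mono)
qed

lemma generic:
  fixes a b kn \<gamma> \<epsilon> L :: real and \<beta> :: "real \<Rightarrow> real"
  assumes a: "a > 0" and b: "b > 0" and kn: "kn > 0" and sa: "sin (kn * a) = 0"
    and sb: "sin (kn * b) \<noteq> 0" and eps: "\<epsilon> = 1 \<or> \<epsilon> = -1"
    and ident: "\<And>t. kn + t > 0 \<Longrightarrow> sin ((kn + t) * b) \<noteq> 0 \<Longrightarrow>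
       \<gamma> / (2 * (kn + t)) * sin ((kn + t) * b) + cos ((kn + t) * b) = \<epsilon> + \<beta> t * sin ((kn + t) * b)"
    and cont: "isCont \<beta> 0" and b0: "\<beta> 0 = 0"
    and der: "((\<lambda>t. tan (a * t / 2) - \<beta> t) has_real_derivative L) (at 0)" and L: "L > 0"
  shows "kn\<^sup>2 \<in> interior (lattice_spec a b \<gamma>)"
proof -
  define \<psi> where "\<psi> = (\<lambda>t. tan (a * t / 2) - \<beta> t)"
  have psi0: "\<psi> 0 = 0" using b0 by (simp add: \<psi>_def)
  define P where "P = (\<lambda>t. kn + t > 0 \<and> sin ((kn + t) * b) \<noteq> 0 \<and> \<bar>a * t\<bar> < pi / 2 \<and> \<bar>\<beta> t\<bar> \<le> 1
     \<and> (t > 0 \<longrightarrow> \<psi> t > 0) \<and> (t < 0 \<longrightarrow> \<psi> t < 0))"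
  have ev1: "\<forall>\<^sub>F t in at 0. kn + t > 0"
  proof -
    have "((\<lambda>t. kn + t) \<longlongrightarrow> kn + 0) (at (0::real))" by (intro tendsto_intros)
    then show ?thesis using kn by (intro order_tendstoD(1)) auto
  qed
  have ev2: "\<forall>\<^sub>F t in at 0. sin ((kn + t) * b) \<noteq> 0"
  proof -
    have "((\<lambda>t. sin ((kn + t) * b)) \<longlongrightarrow> sin ((kn + 0) * b)) (at (0::real))" by (intro tendsto_intros)
    then show ?thesis using sb by (intro tendsto_imp_eventually_ne) auto
  qed
  have ev3: "\<forall>\<^sub>F t in at 0. \<bar>a * t\<bar> < pi / 2"
  proof -
    have "((\<lambda>t. \<bar>a * t\<bar>) \<longlongrightarrow> \<bar>a * 0\<bar>) (at (0::real))" by (intro tendsto_intros)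
    then show ?thesis by (intro order_tendstoD(2)) auto
  qed
  have ev4: "\<forall>\<^sub>F t in at 0. \<bar>\<beta> t\<bar> \<le> 1"
  proof -
    have "(\<beta> \<longlongrightarrow> 0) (at 0)" using cont b0 by (simp add: isCont_def)
    then have "((\<lambda>t. \<bar>\<beta> t\<bar>) \<longlongrightarrow> \<bar>0\<bar>) (at (0::real))" by (intro tendsto_intros)
    then have "\<forall>\<^sub>F t in at 0. \<bar>\<beta> t\<bar> < 1" by (intro order_tendstoD(2)) auto
    then show ?thesis by eventually_elim auto
  qed
  have ev5: "\<forall>\<^sub>F t in at 0. (t > 0 \<longrightarrow> \<psi> t > 0) \<and> (t < 0 \<longrightarrow> \<psi> t < 0)"
  proof -
    have d: "(\<psi> has_real_derivative L) (at 0)" using der by (simp add: \<psi>_def)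
    obtain d1 where d1: "d1 > 0" "\<forall>h>0. h < d1 \<longrightarrow> \<psi> 0 < \<psi> (0 + h)"
      using DERIV_pos_inc_right[OF d L] by blast
    obtain d2 where d2: "d2 > 0" "\<forall>h>0. h < d2 \<longrightarrow> \<psi> (0 - h) < \<psi> 0"
      using DERIV_pos_inc_left[OF d L] by blast
    show ?thesis unfolding eventually_at
    proof (intro exI[of _ "min d1 d2"] conjI ballI impI)
      show "min d1 d2 > 0" using d1 d2 by simp
    next
      fix t :: real assume "t \<noteq> 0 \<and> dist t 0 < min d1 d2" "t > 0"
      then show "\<psi> t > 0" using d1(2)[rule_format, of t] psi0 by (auto simp: dist_real_def)
    next
      fix t :: real assume "t \<noteq> 0 \<and> dist t 0 < min d1 d2" "t < 0"
      then show "\<psi> t < 0" using d2(2)[rule_format, of "-t"] psi0 by (auto simp: dist_real_def)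
    qed
  qed
  have "\<forall>\<^sub>F t in at 0. P t" using ev1 ev2 ev3 ev4 ev5 unfolding P_def by eventually_elim auto
  moreover have "P 0" unfolding P_def using kn sb b0 by simp
  ultimately have "\<forall>\<^sub>F t in nhds 0. P t" by (simp add: eventually_nhds_conv_at)
  then obtain d where d: "d > 0" "\<And>t. \<bar>t\<bar> < d \<Longrightarrow> P t"
    unfolding eventually_nhds_metric by (auto simp: dist_real_def)
  have good: "kn + t > 0 \<and> sin ((kn + t) * b) \<noteq> 0 \<and> lattice_band_cond a b \<gamma> (kn + t)" if "\<bar>t\<bar> < d" for t
  proof -
    have Pt: "P t" using d that by blast
    define \<sigma> where "\<sigma> = cos (kn * a)"
    have sig: "\<bar>\<sigma>\<bar> = 1" using sa sin_cos_squared_add[of "kn * a"] unfolding \<sigma>_def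
      by (simp add: abs_square_eq_1)
    have ka: "(kn + t) * a = kn * a + a * t" by (simp add: algebra_simps)
    have s1: "sin ((kn + t) * a) = \<sigma> * sin (a * t)"
      using sa unfolding \<sigma>_def ka sin_add by simp
    have c1: "cos ((kn + t) * a) = \<sigma> * cos (a * t)"
      using sa unfolding \<sigma>_def ka cos_add by simp
    define S where "S = sin ((kn + t) * b)"
    define x where "x = \<epsilon> * sin (a * t)"
    have cp0: "cos (a * t) \<ge> 0" using Pt unfolding P_def by (intro cos_ge_zero) auto
    have core_ok: "\<bar>x + cos (a * t) * S + (\<epsilon> * \<beta> t) * x * S\<bar> \<le> \<bar>x\<bar> + \<bar>S\<bar>"
    proof (rule core)
      show "0 \<le> cos (a * t)" by (rule cp0)
      show "cos (a * t) \<le> 1" by simp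
      have bt: "\<bar>\<beta> t\<bar> \<le> 1" using Pt unfolding P_def by blast
      have e1: "\<bar>\<epsilon>\<bar> = 1" using eps by auto
      show "\<bar>\<epsilon> * \<beta> t * S\<bar> \<le> 1" unfolding S_def using bt e1
        by (simp add: abs_mult mult_le_one)
      show "\<bar>\<epsilon> * \<beta> t * x\<bar> \<le> 1" unfolding x_def using bt e1
        by (simp add: abs_mult mult_le_one)
    next
      assume xs: "x * S > 0"
      have ee: "\<epsilon> * \<epsilon> = 1" using eps by auto
      have "t \<noteq> 0" using xs unfolding x_def by auto
      have pi: "\<bar>a * t\<bar> < pi" using Pt unfolding P_def by auto
      have "(a * t > 0 \<and> \<beta> t \<le> tan (a * t / 2)) \<or> (a * t < 0 \<and> \<beta> t \<ge> tan (a * t / 2))"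
      proof (cases "t > 0")
        case True
        then have "\<psi> t > 0" using Pt unfolding P_def by blast
        then show ?thesis using True a by (simp add: \<psi>_def)
      next
        case False
        then have "t < 0" using \<open>t \<noteq> 0\<close> by simp
        then have "\<psi> t < 0" using Pt unfolding P_def by blast
        then show ?thesis using \<open>t < 0\<close> a by (simp add: \<psi>_def mult_pos_neg)
      qed
      then have "cos (a * t) + \<beta> t * sin (a * t) \<le> 1" by (intro half pi)
      then show "cos (a * t) + \<epsilon> * \<beta> t * x \<le> 1" unfolding x_def
        using eps by (elim disjE) auto
    qed
    have kpos: "kn + t > 0" and sne: "sin ((kn + t) * b) \<noteq> 0" using Pt unfolding P_def by auto
    have "lattice_band_cond a b \<gamma> (kn + t)"
    proof (rule band_at[OF kpos sne s1 c1 sig ident[OF kpos sne]])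
      have ee: "\<epsilon> * \<epsilon> = 1" using eps by auto
      have "sin (a * t) * (\<epsilon> + \<beta> t * S) + cos (a * t) * S = x + cos (a * t) * S + (\<epsilon> * \<beta> t) * x * S"
        unfolding x_def using eps by (elim disjE) (auto simp: algebra_simps)
      moreover have "\<bar>x\<bar> = \<bar>sin (a * t)\<bar>" unfolding x_def using eps by auto
      ultimately show "\<bar>sin (a * t) * (\<epsilon> + \<beta> t * sin ((kn + t) * b)) + cos (a * t) * sin ((kn + t) * b)\<bar>
          \<le> \<bar>sin ((kn + t) * b)\<bar> + \<bar>sin (a * t)\<bar>"
        using core_ok unfolding S_def by linarith
    qed
    then show ?thesis using kpos sne by blast
  qed
  show ?thesis unfolding mem_interior
  proof (intro exI[of _ "min (d * kn) (kn\<^sup>2)"] conjI subsetI)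
    show "min (d * kn) (kn\<^sup>2) > 0" using d kn by simp
  next
    fix E assume "E \<in> ball (kn\<^sup>2) (min (d * kn) (kn\<^sup>2))"
    then have E: "\<bar>E - kn\<^sup>2\<bar> < d * kn" "\<bar>E - kn\<^sup>2\<bar> < kn\<^sup>2" by (auto simp: dist_real_def)
    then have Epos: "E > 0" by linarith
    define k where "k = sqrt E"
    have kp: "k > 0" and kE: "k\<^sup>2 = E" using Epos by (auto simp: k_def)
    have "E - kn\<^sup>2 = (k - kn) * (k + kn)" using kE by (simp add: power2_eq_square algebra_simps)
    then have "\<bar>k - kn\<bar> * (k + kn) < d * kn" using E(1) kp kn by (simp add: abs_mult)
    moreover have "\<bar>k - kn\<bar> * kn \<le> \<bar>k - kn\<bar> * (k + kn)" using kp by (intro mult_left_mono) auto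
    ultimately have "\<bar>k - kn\<bar> * kn < d * kn" by linarith
    then have "\<bar>k - kn\<bar> < d" using kn by simp
    then have g: "lattice_band_cond a b \<gamma> (kn + (k - kn)) \<and> sin ((kn + (k - kn)) * b) \<noteq> 0"
      using good by blast
    show "E \<in> lattice_spec a b \<gamma>" unfolding lattice_spec_def
      using g kp kE by auto
  qed
qed

lemma tan_half_sin: fixes v :: real assumes "sin v \<noteq> 0"
  shows "tan (v / 2) * sin v = 1 - cos v" "cos (v/2) \<noteq> 0" "sin (v/2) \<noteq> 0"
    "cos (v / 2) / sin (v / 2) * sin v = 1 + cos v"
proof -
  have sv: "sin v = 2 * sin (v/2) * cos (v/2)" using sin_double[of "v/2"] by simp
  have cv: "cos v = 1 - 2 * (sin (v/2))^2" "cos v = 2 * (cos (v/2))^2 - 1"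
    using cos_double_sin[of "v/2"] cos_double_cos[of "v/2"] by simp_all
  show c: "cos (v/2) \<noteq> 0" and s: "sin (v/2) \<noteq> 0" using assms sv by auto
  show "tan (v / 2) * sin v = 1 - cos v" unfolding tan_def sv cv(1) using c by (simp add: power2_eq_square field_simps)
  show "cos (v / 2) / sin (v / 2) * sin v = 1 + cos v" unfolding sv cv(2) using s by (simp add: power2_eq_square field_simps)
qed

lemma main_plus:
  fixes a b :: real and n :: nat
  assumes a: "a > 0" and b: "b > 0" and sb: "sin (pi * real n / a * b) \<noteq> 0"
  shows "(pi * real n / a)\<^sup>2 \<in> interior (lattice_spec a b (2 * (pi * real n / a) * tan (pi * real n / a * b / 2)))"
proof -
  define kn where "kn = pi * real n / a"
  have n: "n > 0" using sb by (cases n) auto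
  have kn: "kn > 0" using n a by (simp add: kn_def)
  have sa: "sin (kn * a) = 0" using a by (simp add: kn_def sin_npi mult.commute)
  have sb': "sin (kn * b) \<noteq> 0" using sb by (simp add: kn_def)
  define X where "X = kn * b / 2"
  have X: "X > 0" using kn b by (simp add: X_def)
  have cX: "cos X \<noteq> 0" using tan_half_sin(2)[OF sb'] by (simp add: X_def)
  define \<gamma> where "\<gamma> = 2 * kn * tan X"
  define \<beta> where "\<beta> = (\<lambda>t. \<gamma> / (2 * (kn + t)) - tan ((kn + t) * b / 2))"
  define L where "L = a / 2 + \<gamma> / (2 * kn\<^sup>2) + b / (2 * (cos X)\<^sup>2)"
  have "kn\<^sup>2 \<in> interior (lattice_spec a b \<gamma>)"
  proof (rule generic[OF a b kn sa sb', where \<gamma>=\<gamma> and \<epsilon>=1 and \<beta>=\<beta> and L=L])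
    show "(1::real) = 1 \<or> 1 = -1" by simp
  next
    fix t assume "kn + t > 0" "sin ((kn + t) * b) \<noteq> 0"
    then show "\<gamma> / (2 * (kn + t)) * sin ((kn + t) * b) + cos ((kn + t) * b) = 1 + \<beta> t * sin ((kn + t) * b)"
      using tan_half_sin(1)[of "(kn + t) * b"] unfolding \<beta>_def by (simp add: algebra_simps)
  next
    show "isCont \<beta> 0" unfolding \<beta>_def using kn cX unfolding X_def
      by (intro continuous_intros) auto
  next
    show "\<beta> 0 = 0" unfolding \<beta>_def \<gamma>_def X_def using kn by simp
  next
    show "((\<lambda>t. tan (a * t / 2) - \<beta> t) has_real_derivative L) (at 0)" unfolding \<beta>_def L_def
      using kn cX unfolding X_def
      by (auto intro!: derivative_eq_intros simp: power2_eq_square field_simps)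
  next
    have "\<bar>sin X\<bar> * \<bar>cos X\<bar> \<le> \<bar>sin X\<bar>"
      using mult_left_le[OF abs_cos_le_one[of X] abs_ge_zero[of "sin X"]] .
    then have "\<bar>sin X * cos X\<bar> \<le> X" using abs_sin_x_le_abs_x[of X] X
      by (simp add: abs_mult)
    then have "sin X * cos X + X \<ge> 0" by linarith
    then have "(sin X * cos X + X) / (cos X)\<^sup>2 \<ge> 0" by simp
    moreover have "kn * L = pi * real n / 2 + (sin X * cos X + X) / (cos X)\<^sup>2"
      unfolding L_def \<gamma>_def X_def using kn a cX unfolding X_def kn_def
      by (simp add: tan_def power2_eq_square field_simps)
    moreover have "pi * real n / 2 > 0" using n by simp
    ultimately have "kn * L > 0" by linarith
    then show "L > 0" using kn by (simp add: zero_less_mult_iff)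
  qed
  then show ?thesis unfolding kn_def \<gamma>_def X_def by simp
qed

lemma sin_sq_alt: "sin (y::real) * sin y = 1 - cos y * cos y"
  using sin_cos_squared_add3[of y] by linarith

lemma main_minus:
  fixes a b :: real and n :: nat
  assumes a: "a > 0" and b: "b > 0" and sb: "sin (pi * real n / a * b) \<noteq> 0"
  shows "(pi * real n / a)\<^sup>2 \<in> interior (lattice_spec a b (- 2 * (pi * real n / a) / tan (pi * real n / a * b / 2)))"
proof -
  define kn where "kn = pi * real n / a"
  have n: "n > 0" using sb by (cases n) auto
  have kn: "kn > 0" using n a by (simp add: kn_def)
  have sa: "sin (kn * a) = 0" using a by (simp add: kn_def sin_npi mult.commute)
  have sb': "sin (kn * b) \<noteq> 0" using sb by (simp add: kn_def)
  define X where "X = kn * b / 2"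
  have X: "X > 0" using kn b by (simp add: X_def)
  have cX: "cos X \<noteq> 0" using tan_half_sin(2)[OF sb'] by (simp add: X_def)
  have sX: "sin X \<noteq> 0" using tan_half_sin(3)[OF sb'] by (simp add: X_def)
  define \<gamma> where "\<gamma> = - 2 * kn / tan X"
  define \<beta> where "\<beta> = (\<lambda>t. \<gamma> / (2 * (kn + t)) + cos ((kn + t) * b / 2) / sin ((kn + t) * b / 2))"
  define L where "L = a / 2 + \<gamma> / (2 * kn\<^sup>2) + b * ((cos X)\<^sup>2 + (sin X)\<^sup>2) / (2 * (sin X)\<^sup>2)"
  have "kn\<^sup>2 \<in> interior (lattice_spec a b \<gamma>)"
  proof (rule generic[OF a b kn sa sb', where \<gamma>=\<gamma> and \<epsilon>="-1" and \<beta>=\<beta> and L=L])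
    show "(-1::real) = 1 \<or> -1 = -1" by simp
  next
    fix t assume "kn + t > 0" "sin ((kn + t) * b) \<noteq> 0"
    then show "\<gamma> / (2 * (kn + t)) * sin ((kn + t) * b) + cos ((kn + t) * b) = -1 + \<beta> t * sin ((kn + t) * b)"
      using tan_half_sin(4)[of "(kn + t) * b"] unfolding \<beta>_def by (simp add: algebra_simps)
  next
    show "isCont \<beta> 0" unfolding \<beta>_def using kn sX unfolding X_def
      by (intro continuous_intros) auto
  next
    show "\<beta> 0 = 0" unfolding \<beta>_def \<gamma>_def X_def using kn sX cX unfolding X_def by (simp add: tan_def)
  next
    show "((\<lambda>t. tan (a * t / 2) - \<beta> t) has_real_derivative L) (at 0)" unfolding \<beta>_def L_def
      using kn cX sX unfolding X_def
      by (auto intro!: derivative_eq_intros simp: power2_eq_square field_simps sin_sq_alt)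
  next
    have "\<bar>sin X\<bar> * \<bar>cos X\<bar> \<le> \<bar>sin X\<bar>"
      using mult_left_le[OF abs_cos_le_one[of X] abs_ge_zero[of "sin X"]] .
    then have "\<bar>sin X * cos X\<bar> \<le> X" using abs_sin_x_le_abs_x[of X] X
      by (simp add: abs_mult)
    then have "X - sin X * cos X \<ge> 0" by linarith
    then have "(X - sin X * cos X) / (sin X)\<^sup>2 \<ge> 0" by simp
    moreover have "kn * L = pi * real n / 2 + (X - sin X * cos X) / (sin X)\<^sup>2"
      unfolding L_def \<gamma>_def X_def using kn a cX sX n unfolding X_def kn_def
      by (simp add: tan_def power2_eq_square field_simps)
    moreover have "pi * real n / 2 > 0" using n by simp
    ultimately have "kn * L > 0" by linarith
    then show "L > 0" using kn by (simp add: zero_less_mult_iff)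
  qed
  then show ?thesis unfolding kn_def \<gamma>_def X_def by simp
qed

theorem lemma3p14:
  fixes a b :: real and n :: nat
  assumes "a > 0" and "b > 0"
    and "sin (pi * real n / a * b) \<noteq> 0"
  shows "(pi * real n / a)\<^sup>2 \<in>
           interior (lattice_spec a b (2 * (pi * real n / a) * tan (pi * real n / a * b / 2)))
       \<and> (pi * real n / a)\<^sup>2 \<in>
           interior (lattice_spec a b (- 2 * (pi * real n / a) / tan (pi * real n / a * b / 2)))"
  using main_plus[OF assms] main_minus[OF assms] by blast

end
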